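(* Let $q\ge3$ be a prime power, $s\in\mathbb{N}$ with $s\mid q-1$, $\Gamma$ the subgroup of $\mathbb{F}_q^*$ of order $\frac{q-1}{s}$, and $H\subset\mathbb{F}_q^*$ a set of $r$ elements lying in pairwise distinct cosets of $\Gamma$. Let $H\Gamma=\{h\gamma:h\in H,\gamma\in\Gamma\}$ and $E=\{x(1,y)\in\mathbb{F}_q^2: x,y\in H\Gamma\}$. If $$(q-1)^6r^6+(q-1)s^5q^5r-s^6(q^6+q^5)>0$$ and $\varpi\colon(\mathbb{F}_q^2)^{\otimes 3}\to\mathbb{F}_q$ is a ternary form non-degenerate in some coordinate, then $\mathbb{F}_q^*\subset\varpi(E^3)=\{\varpi(x,y,z):x,y,z\in E\}$.
   Context: A 3-linear form $\varpi$ on $\mathbb{F}_q^2$ is non-degenerate in coordinate $j$ if for every nonzero $y\in\mathbb{F}_q^2$ the bilinear map obtained by fixing the $j$-th argument equal to $y$ is not identically zero. $\mathbb{F}_q^*=\mathbb{F}_q\setminus\{0\}$. *)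

theory Defs
  imports Main "HOL-Library.Cardinality"
begin

definition vadd :: "'a::field \<times> 'a \<Rightarrow> 'a \<times> 'a \<Rightarrow> 'a \<times> 'a" where
  "vadd u v = (fst u + fst v, snd u + snd v)"

definition vsmul :: "'a::field \<Rightarrow> 'a \<times> 'a \<Rightarrow> 'a \<times> 'a" where
  "vsmul c u = (c * fst u, c * snd u)"

definition lin2 :: "('a::field \<times> 'a \<Rightarrow> 'a) \<Rightarrow> bool" where
  "lin2 f \<longleftrightarrow> (\<forall>u v. f (vadd u v) = f u + f v) \<and> (\<forall>c u. f (vsmul c u) = c * f u)"

definition trilinear :: "('a::field \<times> 'a \<Rightarrow> 'a \<times> 'a \<Rightarrow> 'a \<times> 'a \<Rightarrow> 'a) \<Rightarrow> bool" where
  "trilinear w \<longleftrightarrow>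
     (\<forall>y z. lin2 (\<lambda>x. w x y z)) \<and> (\<forall>x z. lin2 (\<lambda>y. w x y z)) \<and> (\<forall>x y. lin2 (\<lambda>z. w x y z))"

definition nondeg_coord :: "('a::field \<times> 'a \<Rightarrow> 'a \<times> 'a \<Rightarrow> 'a \<times> 'a \<Rightarrow> 'a) \<Rightarrow> nat \<Rightarrow> bool" where
  "nondeg_coord w j \<longleftrightarrow> (\<forall>y. y \<noteq> (0, 0) \<longrightarrow>
     (if j = 1 then (\<exists>u v. w y u v \<noteq> 0)
      else if j = 2 then (\<exists>u v. w u y v \<noteq> 0)
      else (\<exists>u v. w u v y \<noteq> 0)))"

definition mult_subgroup :: "'a::field set \<Rightarrow> bool" where
  "mult_subgroup G \<longleftrightarrow> 1 \<in> G \<and> 0 \<notin> G \<and> (\<forall>a\<in>G. \<forall>b\<in>G. a * b \<in> G) \<and> (\<forall>a\<in>G. inverse a \<in> G)"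

end

theory Submission
  imports Defs
begin

lemma lin2_zero:
  assumes "lin2 f" "(a::'a::field) \<noteq> b" "f (1,a) = 0" "f (1,b) = 0"
  shows "f u = 0"
proof -
  obtain u1 u2 where u: "u = (u1,u2)" by (cases u)
  define \<beta> where "\<beta> = (u2 - a*u1)/(b-a)"
  define \<alpha> where "\<alpha> = u1 - \<beta>"
  have ba: "b - a \<noteq> 0" using assms(2) by simp
  have bb: "\<beta> * (b - a) = u2 - a*u1" unfolding \<beta>_def using ba by simp
  have "\<alpha> * a + \<beta> * b = u2" unfolding \<alpha>_def using bb by (simp add: algebra_simps)
  then have "u = vadd (vsmul \<alpha> (1,a)) (vsmul \<beta> (1,b))"
    by (simp add: u vadd_def vsmul_def \<alpha>_def)
  moreover have A: "\<And>u v. f (vadd u v) = f u + f v" and B: "\<And>c u. f (vsmul c u) = c * f u"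
    using assms(1) unfolding lin2_def by blast+
  ultimately have "f u = \<alpha> * f (1,a) + \<beta> * f (1,b)" by (simp only: A B)
  then show ?thesis using assms by simp
qed

lemma tri_zero:
  assumes tri: "trilinear w" and ab: "(a::'a::field) \<noteq> b"
    and z: "\<forall>p\<in>{(1,a),(1,b)}. \<forall>q\<in>{(1,a),(1,b)}. \<forall>r\<in>{(1,a),(1,b)}. w p q r = 0"
  shows "w u v t = 0"
proof -
  have 1: "\<forall>q\<in>{(1,a),(1,b)}. \<forall>r\<in>{(1,a),(1,b)}. w u q r = 0" for u
  proof (intro ballI)
    fix q r :: "'a \<times> 'a" assume "q \<in> {(1,a),(1,b)}" "r \<in> {(1,a),(1,b)}"
    then show "w u q r = 0"
      using lin2_zero[of "\<lambda>x. w x q r" a b u] tri ab z unfolding trilinear_def by auto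
  qed
  have 2: "\<forall>r\<in>{(1,a),(1,b)}. w u v r = 0" for u v
  proof (intro ballI)
    fix r :: "'a \<times> 'a" assume "r \<in> {(1,a),(1,b)}"
    then show "w u v r = 0"
      using lin2_zero[of "\<lambda>y. w u y r" a b v] tri ab 1[of u] unfolding trilinear_def by auto
  qed
  show ?thesis
    using lin2_zero[of "\<lambda>y. w u v y" a b t] tri ab 2[of u v] unfolding trilinear_def by auto
qed

lemma tri_scale:
  assumes "trilinear w"
  shows "w (vsmul x1 p1) (vsmul x2 p2) (vsmul x3 p3) = x1 * x2 * x3 * w p1 p2 p3"
proof -
  have A: "\<And>c u y z. w (vsmul c u) y z = c * w u y z"
   and B: "\<And>c u y z. w y (vsmul c u) z = c * w y u z"
   and C: "\<And>c u y z. w y z (vsmul c u) = c * w y z u"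
    using assms unfolding trilinear_def lin2_def by blast+
  show ?thesis by (simp add: A B C)
qed

lemma ineq_r:
  fixes Q S R :: int
  assumes "Q \<ge> 3" "S \<ge> 1" "R \<ge> 0"
    and ineq: "(Q - 1)^6 * R^6 + (Q - 1) * S^5 * Q^5 * R - S^6 * (Q^6 + Q^5) > 0"
  shows "2 * R > S"
proof (rule ccontr)
  assume "\<not> 2 * R > S"
  then have le: "2 * R \<le> S" by simp
  have p: "(2*R)^6 \<le> S^6" by (rule power_mono) (use le assms in auto)
  have p2: "(Q-1)^6 \<le> Q^6" by (rule power_mono) (use assms in auto)
  have a: "(Q - 1)^6 * (2*R)^6 \<le> Q^6 * S^6"
    by (rule mult_mono[OF p2 p]) (use assms in auto)
  have b: "(Q - 1) * (S^5 * Q^5) * (2*R) \<le> Q * (S^5 * Q^5) * S"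
    by (rule mult_mono) (use assms le in \<open>auto intro: mult_mono\<close>)
  have c: "S^6 * Q^5 \<ge> 0" using assms by simp
  have "64 * ((Q - 1)^6 * R^6 + (Q - 1) * S^5 * Q^5 * R) \<le> 33 * (Q^6 * S^6)"
    using a b by (simp add: power_mult_distrib algebra_simps power_numeral_reduce)
  moreover have "Q^6 * S^6 > 0" using assms by simp
  ultimately show False using ineq c by (simp add: algebra_simps)
qed

theorem mainTheorem8:
  fixes \<Gamma> H :: "'a::{field, finite} set"
    and s r :: nat
    and w :: "'a \<times> 'a \<Rightarrow> 'a \<times> 'a \<Rightarrow> 'a \<times> 'a \<Rightarrow> 'a"
  assumes q3: "CARD('a) \<ge> 3"
    and sdvd: "s dvd (CARD('a) - 1)"
    and Gsub: "mult_subgroup \<Gamma>"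
    and Gcard: "card \<Gamma> = (CARD('a) - 1) div s"
    and Hsub: "H \<subseteq> {x. x \<noteq> 0}"
    and Hcard: "card H = r"
    and Hcos: "\<forall>h1\<in>H. \<forall>h2\<in>H. h1 \<noteq> h2 \<longrightarrow> h1 / h2 \<notin> \<Gamma>"
    and ineq: "(int CARD('a) - 1)^6 * (int r)^6 + (int CARD('a) - 1) * (int s)^5 * (int CARD('a))^5 * int r
               - (int s)^6 * ((int CARD('a))^6 + (int CARD('a))^5) > 0"
    and tri: "trilinear w"
    and nd: "\<exists>j\<in>{1,2,3}. nondeg_coord w j"
  shows "{c::'a. c \<noteq> 0} \<subseteq>
    (let HG = {h * g | h g. h \<in> H \<and> g \<in> \<Gamma>};
         E = {(x, x * y) | x y. x \<in> HG \<and> y \<in> HG}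
     in {w a b c | a b c. a \<in> E \<and> b \<in> E \<and> c \<in> E})"
proof -
  define q where "q = CARD('a)"
  define HG where "HG = {h * g | h g. h \<in> H \<and> g \<in> \<Gamma>}"
  define E where "E = {(x, x * y) | x y. x \<in> HG \<and> y \<in> HG}"
  have s0: "s > 0" using sdvd q3 by (cases "s = 0") auto
  have sg: "s * card \<Gamma> = q - 1" using sdvd Gcard q_def by simp
  have r2: "2 * int r > int s"
    by (rule ineq_r[of "int q"]) (use q3 s0 ineq q_def in auto)
  have G0: "0 \<notin> \<Gamma>" and G1: "1 \<in> \<Gamma>" using Gsub unfolding mult_subgroup_def by auto
  have gpos: "card \<Gamma> > 0" using G1 by (auto simp add: card_gt_0_iff)
  have HGimg: "HG = (\<lambda>(h,g). h * g) ` (H \<times> \<Gamma>)" unfolding HG_def by auto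
  have inj: "inj_on (\<lambda>(h,g). h * g) (H \<times> \<Gamma>)"
  proof (rule inj_onI, clarify)
    fix h1 g1 h2 g2 assume A: "h1 \<in> H" "g1 \<in> \<Gamma>" "h2 \<in> H" "g2 \<in> \<Gamma>" "h1 * g1 = h2 * g2"
    have nz: "h1 \<noteq> 0" "h2 \<noteq> 0" "g1 \<noteq> 0" "g2 \<noteq> 0" using A Hsub G0 by auto
    have "h1 / h2 = g2 * inverse g1" using A(5) nz by (simp add: field_simps)
    moreover have "g2 * inverse g1 \<in> \<Gamma>" using Gsub A unfolding mult_subgroup_def by auto
    ultimately have "h1 = h2" using Hcos A by metis
    then show "h1 = h2 \<and> g1 = g2" using A(5) nz by simp
  qed
  have cardHG: "card HG = r * card \<Gamma>"
    using HGimg card_image[OF inj] Hcard by (simp add: card_cartesian_product)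
  have big: "2 * card HG > q - 1"
  proof -
    have "2 * r > s" using r2 by linarith
    then have "2 * r * card \<Gamma> > s * card \<Gamma>" using gpos by simp
    then show ?thesis using cardHG sg by (simp add: algebra_simps)
  qed
  have HGnz: "HG \<subseteq> {x. x \<noteq> 0}" unfolding HG_def using Hsub G0 by auto
  have cardF: "card {x::'a. x \<noteq> 0} = q - 1"
  proof -
    have "{x::'a. x \<noteq> 0} = UNIV - {0}" by auto
    then show ?thesis by (simp add: card_Diff_subset q_def)
  qed
  have prod: "\<exists>x\<in>HG. \<exists>y\<in>HG. c = x * y" if c: "c \<noteq> 0" for c
  proof (rule ccontr)
    assume no: "\<not> ?thesis"
    define S where "S = (\<lambda>x. c / x) ` HG"
    have injS: "inj_on (\<lambda>x. c / x) HG"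
      by (rule inj_onI) (use c HGnz in \<open>auto simp: field_simps\<close>)
    have cS: "card S = card HG" unfolding S_def using card_image[OF injS] .
    have disj: "HG \<inter> S = {}"
    proof -
      { fix z assume "z \<in> HG" "z \<in> S"
        then obtain x where x: "x \<in> HG" "z = c / x" unfolding S_def by auto
        then have "c = z * x" using HGnz \<open>z \<in> HG\<close> by auto
        then have False using no x \<open>z \<in> HG\<close> by blast }
      then show ?thesis by blast
    qed
    have sub: "HG \<union> S \<subseteq> {x. x \<noteq> 0}" using HGnz c unfolding S_def by auto
    have "card (HG \<union> S) = 2 * card HG" using disj cS by (simp add: card_Un_disjoint)
    moreover have "card (HG \<union> S) \<le> q - 1" using card_mono[OF _ sub] cardF by simp
    ultimately show False using big by simp
  qed
  have "card HG \<ge> 2" using big q3 q_def by linarith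
  have finHG: "finite HG" by simp
  then have "HG \<noteq> {}" using \<open>card HG \<ge> 2\<close> by auto
  then obtain a where a: "a \<in> HG" by blast
  have "card (HG - {a}) \<ge> 1" using a \<open>card HG \<ge> 2\<close> finHG by simp
  then have "HG - {a} \<noteq> {}" by (metis card.empty not_one_le_zero)
  then obtain b where b: "b \<in> HG - {a}" by blast
  have ab: "a \<in> HG" "b \<in> HG" "a \<noteq> b" using a b by auto
  have anz: "a \<noteq> 0" using ab HGnz by auto
  have wnz: "\<exists>u v t. w u v t \<noteq> 0"
  proof -
    obtain j where j: "j \<in> {1,2,3}" "nondeg_coord w j" using nd by blast
    have y: "(1::'a, 0::'a) \<noteq> (0, 0)" by simp
    have H: "if j = 1 then (\<exists>u v. w (1,0) u v \<noteq> 0)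
      else if j = 2 then (\<exists>u v. w u (1,0) v \<noteq> 0)
      else (\<exists>u v. w u v (1,0) \<noteq> 0)"
      using j(2) y unfolding nondeg_coord_def by blast
    show ?thesis
    proof (cases "j = 1")
      case True
      then have "\<exists>u v. w (1,0) u v \<noteq> 0" using H by simp
      then show ?thesis by blast
    next
      case False
      show ?thesis
      proof (cases "j = 2")
        case True
        then have "\<exists>u v. w u (1,0) v \<noteq> 0" using H False by simp
        then show ?thesis by blast
      next
        case F2: False
        then have "\<exists>u v. w u v (1,0) \<noteq> 0" using H False by simp
        then show ?thesis by blast
      qed
    qed
  qed
  have "\<exists>y1\<in>{a,b}. \<exists>y2\<in>{a,b}. \<exists>y3\<in>{a,b}. w (1,y1) (1,y2) (1,y3) \<noteq> 0"
  proof (rule ccontr)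
    assume "\<not> ?thesis"
    then have "\<forall>p\<in>{(1,a),(1,b)}. \<forall>q\<in>{(1,a),(1,b)}. \<forall>r\<in>{(1,a),(1,b)}. w p q r = 0" by auto
    then have "\<And>u v t. w u v t = 0" using tri_zero[OF tri ab(3)] by blast
    then show False using wnz by blast
  qed
  then obtain y1 y2 y3 where y: "y1 \<in> {a,b}" "y2 \<in> {a,b}" "y3 \<in> {a,b}"
    and f: "w (1,y1) (1,y2) (1,y3) \<noteq> 0" by blast
  have yHG: "y1 \<in> HG" "y2 \<in> HG" "y3 \<in> HG" using y ab by auto
  define f where "f = w (1,y1) (1,y2) (1,y3)"
  have "{c::'a. c \<noteq> 0} \<subseteq> {w u v t | u v t. u \<in> E \<and> v \<in> E \<and> t \<in> E}"
  proof
    fix c :: 'a assume "c \<in> {c. c \<noteq> 0}"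
    then have c: "c \<noteq> 0" by simp
    then have "c / (f * a) \<noteq> 0" using f anz f_def by simp
    then obtain x1 x2 where x: "x1 \<in> HG" "x2 \<in> HG" "c / (f * a) = x1 * x2"
      using prod by blast
    have e1: "(x1, x1 * y1) \<in> E" "(x2, x2 * y2) \<in> E" "(a, a * y3) \<in> E"
      unfolding E_def using x yHG ab by auto
    have "w (x1, x1 * y1) (x2, x2 * y2) (a, a * y3)
        = w (vsmul x1 (1,y1)) (vsmul x2 (1,y2)) (vsmul a (1,y3))"
      by (simp add: vsmul_def)
    also have "\<dots> = x1 * x2 * a * f" unfolding f_def by (rule tri_scale[OF tri])
    also have "\<dots> = c" using x(3) f anz f_def by (simp add: field_simps)
    finally show "c \<in> {w u v t | u v t. u \<in> E \<and> v \<in> E \<and> t \<in> E}" using e1 by blast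
  qed
  then show ?thesis unfolding Let_def HG_def E_def by simp
qed

end
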